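(* Let $\mathbb{F}_2=\langle a\rangle\ast\langle b\rangle$, let $f_A:\langle a\rangle\to\mathbb{R}$ be a bounded, alternating, periodic function, and let $f=f_A\ast 0$. Then the stabilizers $\mathrm{Stab}_{\mathrm{Aut}(\mathbb{F}_2)}(f)$, $\mathrm{Stab}_{\mathrm{Out}(\mathbb{F}_2)}(\widehat f)$ and $\mathrm{Stab}_{\mathrm{Out}(\mathbb{F}_2)}(\omega_f)$ are infinite.
   Context: Alternating means $f_A(x^{-1})=-f_A(x)$; periodic means $f_A(a^{k+n})=f_A(a^k)$ for some $n\neq0$ and all $k$. Each non-trivial element of $\mathbb{F}_2$ has a unique normal form $a^{k_1}b^{l_1}\cdots a^{k_m}b^{l_m}$ with all exponents non-zero except possibly $k_1$ or $l_m$, and $f(1)=0$, $f(a^{k_1}b^{l_1}\cdots a^{k_m}b^{l_m})=f_A(a^{k_1})+\dots+f_A(a^{k_m})$. Automorphisms act on functions by $\tau.f=f\circ\tau^{-1}$; $\widehat f(g)=\lim_{k\to\infty}f(g^k)/k$ is the homogenization (conjugation invariant, so the action on homogeneous quasimorphisms factors through $\mathrm{Out}(\mathbb{F}_2)$); $\omega_f\in\mathrm{H}^2_\mathrm{b}(\mathbb{F}_2,\mathbb{R})$ is the bounded class of $\partial f(g,h)=f(g)+f(h)-f(gh)$ with the natural action $\tau.\omega_f=\omega_{\tau.f}$ of $\mathrm{Out}(\mathbb{F}_2)$. *)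

theory Defs
  imports "HOL-Algebra.Group" "HOL-Analysis.Analysis"
begin

text \<open>A syllable (True, k) stands for a^k, (False, l) for b^l. A normal form is a
list of syllables with non-zero exponents and alternating generators.\<close>

type_synonym f2word = "(bool \<times> int) list"

fun alt_gens :: "f2word \<Rightarrow> bool" where
  "alt_gens [] = True"
| "alt_gens [_] = True"
| "alt_gens ((g, _) # (h, e) # w) = (g \<noteq> h \<and> alt_gens ((h, e) # w))"

definition reduced :: "f2word \<Rightarrow> bool" where
  "reduced w \<longleftrightarrow> (\<forall>s \<in> set w. snd s \<noteq> 0) \<and> alt_gens w"

fun scons :: "bool \<times> int \<Rightarrow> f2word \<Rightarrow> f2word" where
  "scons (g, e) [] = (if e = 0 then [] else [(g, e)])"
| "scons (g, e) ((h, d) # w) =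
     (if e = 0 then (h, d) # w
      else if g = h then (if e + d = 0 then w else (g, e + d) # w)
      else (g, e) # (h, d) # w)"

definition f2_mult :: "f2word \<Rightarrow> f2word \<Rightarrow> f2word" where
  "f2_mult x y = foldr scons x y"

definition F2 :: "f2word monoid" where
  "F2 = \<lparr>carrier = {w. reduced w}, monoid.mult = f2_mult, one = []\<rparr>"

definition Aut :: "(f2word \<Rightarrow> f2word) set" where
  "Aut = {\<tau>. \<tau> \<in> iso F2 F2 \<and> \<tau> \<in> extensional (carrier F2)}"

definition act :: "(f2word \<Rightarrow> f2word) \<Rightarrow> (f2word \<Rightarrow> real) \<Rightarrow> f2word \<Rightarrow> real" where
  "act \<tau> f = (\<lambda>x. f (inv_into (carrier F2) \<tau> x))"

text \<open>The class of tau in Out(F2) = Aut(F2)/Inn(F2).\<close>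
definition out_class :: "(f2word \<Rightarrow> f2word) \<Rightarrow> (f2word \<Rightarrow> f2word) set" where
  "out_class \<tau> = {\<sigma> \<in> Aut. \<exists>g \<in> carrier F2. \<forall>x \<in> carrier F2.
      \<sigma> x = g \<otimes>\<^bsub>F2\<^esub> \<tau> x \<otimes>\<^bsub>F2\<^esub> inv\<^bsub>F2\<^esub> g}"

text \<open>A function f_A on <a> is represented by k \<mapsto> f_A(a^k).\<close>
definition alternating :: "(int \<Rightarrow> real) \<Rightarrow> bool" where
  "alternating fA \<longleftrightarrow> (\<forall>k. fA (- k) = - fA k)"

definition periodic :: "(int \<Rightarrow> real) \<Rightarrow> bool" where
  "periodic fA \<longleftrightarrow> (\<exists>n. n \<noteq> 0 \<and> (\<forall>k. fA (k + n) = fA k))"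

definition bounded_fun :: "(int \<Rightarrow> real) \<Rightarrow> bool" where
  "bounded_fun fA \<longleftrightarrow> (\<exists>C. \<forall>k. \<bar>fA k\<bar> \<le> C)"

definition free_prod_zero :: "(int \<Rightarrow> real) \<Rightarrow> f2word \<Rightarrow> real" where
  "free_prod_zero fA w = (\<Sum>s\<leftarrow>w. if fst s then fA (snd s) else 0)"

definition homog :: "(f2word \<Rightarrow> real) \<Rightarrow> f2word \<Rightarrow> real" where
  "homog f g = lim (\<lambda>k::nat. f (g [^]\<^bsub>F2\<^esub> k) / real k)"

definition cobdry :: "(f2word \<Rightarrow> real) \<Rightarrow> f2word \<Rightarrow> f2word \<Rightarrow> real" where
  "cobdry f g h = f g + f h - f (g \<otimes>\<^bsub>F2\<^esub> h)"

text \<open>omega_f = omega_g in H^2_b(F2,R): the cocycles differ by the coboundary of a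
bounded 1-cochain.\<close>
definition same_bclass :: "(f2word \<Rightarrow> real) \<Rightarrow> (f2word \<Rightarrow> real) \<Rightarrow> bool" where
  "same_bclass f g \<longleftrightarrow> (\<exists>u. (\<exists>C. \<forall>x \<in> carrier F2. \<bar>u x\<bar> \<le> C) \<and>
      (\<forall>x \<in> carrier F2. \<forall>y \<in> carrier F2. cobdry f x y - cobdry g x y = cobdry u x y))"

definition Stab_Aut :: "(f2word \<Rightarrow> real) \<Rightarrow> (f2word \<Rightarrow> f2word) set" where
  "Stab_Aut f = {\<tau> \<in> Aut. \<forall>x \<in> carrier F2. act \<tau> f x = f x}"

text \<open>Stabilizer in Out(F2) of a homogeneous (conjugation-invariant) function:
the classes of automorphisms fixing it.\<close>
definition Stab_Out_fun :: "(f2word \<Rightarrow> real) \<Rightarrow> (f2word \<Rightarrow> f2word) set set" where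
  "Stab_Out_fun \<phi> = out_class ` Stab_Aut \<phi>"

definition Stab_Out_bclass :: "(f2word \<Rightarrow> real) \<Rightarrow> (f2word \<Rightarrow> f2word) set set" where
  "Stab_Out_bclass f = out_class ` {\<tau> \<in> Aut. same_bclass (act \<tau> f) f}"

end

theory Submission
  imports Defs
begin

lemma alt_gens_tl: "alt_gens (s # w) \<Longrightarrow> alt_gens w"
  by (cases s; cases w) (auto simp del: alt_gens.simps(3) simp add: alt_gens.simps)

lemma reduced_tl: "reduced (s # w) \<Longrightarrow> reduced w"
  unfolding reduced_def by (auto dest: alt_gens_tl)

lemma reduced_Cons: "reduced (s # w) \<longleftrightarrow> snd s \<noteq> 0 \<and> reduced w \<and> (w = [] \<or> fst (hd w) \<noteq> fst s)"
  unfolding reduced_def by (cases s; cases w) (auto simp del: alt_gens.simps(3) simp add: alt_gens.simps)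

lemma scons_zero[simp]: "scons (g, 0) w = w"
  by (cases w) auto

lemma scons_reduced: "reduced w \<Longrightarrow> reduced (scons s w)"
  apply (cases s; cases w)
   apply (auto simp: reduced_Cons)
  apply (auto simp: reduced_Cons split: if_splits)
  done

lemma foldr_scons_reduced: "reduced y \<Longrightarrow> reduced (foldr scons x y)"
  by (induction x) (auto intro: scons_reduced)

lemma scons_add: "reduced w \<Longrightarrow> scons (g, e) (scons (g, d) w) = scons (g, e + d) w"
proof (cases w)
  case Nil then show ?thesis by auto
next
  case (Cons s w')
  assume r: "reduced w"
  obtain h c where s: "s = (h, c)" by fastforce
  show ?thesis
  proof (cases "w' = []")
    case True then show ?thesis using Cons s r by (auto simp: reduced_Cons)
  next
    case False
    then obtain h' c' w'' where w': "w' = (h', c') # w''" by (metis list.exhaust prod.exhaust)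
    show ?thesis using Cons s w' r by (auto simp: reduced_Cons)
  qed
qed

lemma foldr_scons_scons:
  assumes "reduced v" "reduced z"
  shows "foldr scons (scons s v) z = scons s (foldr scons v z)"
proof -
  obtain g e where s: "s = (g, e)" by fastforce
  show ?thesis
  proof (cases v)
    case Nil then show ?thesis using s by auto
  next
    case (Cons t v')
    obtain h d where t: "t = (h, d)" by fastforce
    have rv': "reduced v'" using assms Cons reduced_tl by blast
    have rz: "reduced (foldr scons v' z)" using assms(2) foldr_scons_reduced by blast
    show ?thesis using Cons s t scons_add[OF rz, of g e d] by auto
  qed
qed

lemma f2_assoc:
  assumes "reduced x" "reduced y" "reduced z"
  shows "f2_mult (f2_mult x y) z = f2_mult x (f2_mult y z)"
  using assms(1)
proof (induction x)
  case Nil then show ?case by (simp add: f2_mult_def)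
next
  case (Cons s x')
  have "reduced x'" using Cons.prems reduced_tl by blast
  then have ih: "f2_mult (f2_mult x' y) z = f2_mult x' (f2_mult y z)" using Cons.IH by blast
  have r: "reduced (foldr scons x' y)" using assms(2) foldr_scons_reduced by blast
  show ?case using ih foldr_scons_scons[OF r assms(3), of s] by (simp add: f2_mult_def)
qed

lemma foldr_scons_nil: "reduced x \<Longrightarrow> foldr scons x [] = x"
proof (induction x)
  case Nil then show ?case by simp
next
  case (Cons s x')
  then have "reduced x'" using reduced_tl by blast
  then have "foldr scons x' [] = x'" using Cons by blast
  then show ?case using Cons.prems
    by (cases s; cases x') (auto simp: reduced_Cons)
qed

definition neg_word :: "f2word \<Rightarrow> f2word" where
  "neg_word x = rev (map (\<lambda>(g,e). (g, -e)) x)"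

lemma neg_word_inv: "reduced x \<Longrightarrow> foldr scons (neg_word x) x = []"
proof (induction x)
  case Nil then show ?case by (simp add: neg_word_def)
next
  case (Cons s x')
  then have "reduced x'" using reduced_tl by blast
  then have ih: "foldr scons (neg_word x') x' = []" using Cons by blast
  obtain g e where s: "s = (g, e)" by fastforce
  have "e \<noteq> 0" using Cons.prems s by (auto simp: reduced_Cons)
  then show ?case using ih s by (simp add: neg_word_def)
qed

lemma alt_gens_snoc: "alt_gens (w @ [s]) \<longleftrightarrow> alt_gens w \<and> (w = [] \<or> fst (last w) \<noteq> fst s)"
proof (induction w)
  case Nil then show ?case by simp
next
  case (Cons t w)
  then show ?case
    by (cases t; cases s; cases w) (auto simp del: alt_gens.simps(3) simp add: alt_gens.simps)
qed

lemma reduced_snoc: "reduced (w @ [s]) \<longleftrightarrow> reduced w \<and> snd s \<noteq> 0 \<and> (w = [] \<or> fst (last w) \<noteq> fst s)"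
  unfolding reduced_def using alt_gens_snoc by auto

lemma neg_word_reduced: "reduced x \<Longrightarrow> reduced (neg_word x)"
  unfolding neg_word_def
proof (induction x)
  case Nil then show ?case by (simp add: reduced_def)
next
  case (Cons s x')
  then have "reduced x'" using reduced_tl by blast
  then have ih: "reduced (rev (map (\<lambda>(g,e). (g, -e)) x'))" using Cons by blast
  obtain g e where s: "s = (g, e)" by fastforce
  have "rev (map (\<lambda>(g,e). (g, -e)) (s # x')) = rev (map (\<lambda>(g,e). (g, -e)) x') @ [(g, -e)]"
    using s by simp
  moreover have "x' \<noteq> [] \<Longrightarrow> fst (last (rev (map (\<lambda>(g,e). (g, -e)) x'))) \<noteq> g"
    using Cons.prems s by (cases x') (auto simp: reduced_Cons split: prod.splits)
  moreover have "e \<noteq> 0" using Cons.prems s by (simp add: reduced_Cons)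
  ultimately show ?case using ih by (cases "x' = []") (simp add: reduced_def, simp add: reduced_snoc)
qed

lemma group_F2: "group F2"
proof (rule groupI)
  show "\<one>\<^bsub>F2\<^esub> \<in> carrier F2" by (simp add: F2_def reduced_def)
next
  fix x y assume "x \<in> carrier F2" "y \<in> carrier F2"
  then show "x \<otimes>\<^bsub>F2\<^esub> y \<in> carrier F2" by (simp add: F2_def f2_mult_def foldr_scons_reduced)
next
  fix x y z assume "x \<in> carrier F2" "y \<in> carrier F2" "z \<in> carrier F2"
  then show "x \<otimes>\<^bsub>F2\<^esub> y \<otimes>\<^bsub>F2\<^esub> z = x \<otimes>\<^bsub>F2\<^esub> (y \<otimes>\<^bsub>F2\<^esub> z)"
    by (simp add: F2_def f2_assoc)
next
  fix x assume "x \<in> carrier F2"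
  then show "\<one>\<^bsub>F2\<^esub> \<otimes>\<^bsub>F2\<^esub> x = x" by (simp add: F2_def f2_mult_def)
next
  fix x assume "x \<in> carrier F2"
  then show "\<exists>y\<in>carrier F2. y \<otimes>\<^bsub>F2\<^esub> x = \<one>\<^bsub>F2\<^esub>"
    by (intro bexI[of _ "neg_word x"]) (auto simp: F2_def f2_mult_def neg_word_inv neg_word_reduced)
qed


section \<open>Extension of syllable maps\<close>

definition extm :: "(bool \<times> int \<Rightarrow> f2word) \<Rightarrow> f2word \<Rightarrow> f2word" where
  "extm \<phi> w = foldr (\<lambda>s acc. f2_mult (\<phi> s) acc) w []"

lemma f2_mult_reduced: "reduced y \<Longrightarrow> reduced (f2_mult x y)"
  by (simp add: f2_mult_def foldr_scons_reduced)

lemma f2_mult_Nil[simp]: "f2_mult [] y = y"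
  by (simp add: f2_mult_def)

lemma f2_mult_Nil2: "reduced x \<Longrightarrow> f2_mult x [] = x"
  by (simp add: f2_mult_def foldr_scons_nil)

lemma extm_Nil[simp]: "extm \<phi> [] = []" by (simp add: extm_def)
lemma extm_Cons[simp]: "extm \<phi> (s # w) = f2_mult (\<phi> s) (extm \<phi> w)" by (simp add: extm_def)

lemma reduced_Nil[simp]: "reduced []" by (simp add: reduced_def)

lemma extm_reduced: "(\<And>s. reduced (\<phi> s)) \<Longrightarrow> reduced (extm \<phi> w)"
  by (induction w) (simp_all add: f2_mult_reduced)

context
  fixes \<phi> :: "bool \<times> int \<Rightarrow> f2word"
  assumes P1: "\<And>s. reduced (\<phi> s)"
    and P2: "\<And>g. \<phi> (g, 0) = []"
    and P3: "\<And>g e d. \<phi> (g, e + d) = f2_mult (\<phi> (g, e)) (\<phi> (g, d))"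
begin

lemma extm_scons: "reduced w \<Longrightarrow> extm \<phi> (scons s w) = f2_mult (\<phi> s) (extm \<phi> w)"
proof -
  assume r: "reduced w"
  obtain g e where s: "s = (g, e)" by fastforce
  show ?thesis
  proof (cases w)
    case Nil then show ?thesis using s P2 by (simp add: f2_mult_Nil2 P1)
  next
    case (Cons t w')
    obtain h d where t: "t = (h, d)" by fastforce
    have rw': "reduced (extm \<phi> w')" using extm_reduced P1 by blast
    have A: "f2_mult (\<phi> (g, e)) (f2_mult (\<phi> (g, d)) (extm \<phi> w')) = f2_mult (\<phi> (g, e + d)) (extm \<phi> w')"
      using f2_assoc[OF P1 P1 rw', of "(g,e)" "(g,d)"] P3 by simp
    show ?thesis using Cons s t A P2 by auto
  qed
qed

lemma extm_mult: "reduced x \<Longrightarrow> reduced y \<Longrightarrow> extm \<phi> (f2_mult x y) = f2_mult (extm \<phi> x) (extm \<phi> y)"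
proof (induction x)
  case Nil then show ?case by simp
next
  case (Cons s x')
  have rx': "reduced x'" using Cons.prems reduced_tl by blast
  have r1: "reduced (f2_mult x' y)" using Cons.prems f2_mult_reduced by blast
  have "extm \<phi> (f2_mult (s # x') y) = extm \<phi> (scons s (f2_mult x' y))"
    by (simp add: f2_mult_def)
  also have "\<dots> = f2_mult (\<phi> s) (f2_mult (extm \<phi> x') (extm \<phi> y))"
    using extm_scons[OF r1] Cons.IH[OF rx' Cons.prems(2)] by simp
  also have "\<dots> = f2_mult (extm \<phi> (s # x')) (extm \<phi> y)"
    using f2_assoc[OF P1 extm_reduced[OF P1] extm_reduced[OF P1]] by simp
  finally show ?case .
qed

end

section \<open>The automorphisms\<close>

definition cw :: "int \<Rightarrow> int \<Rightarrow> f2word" where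
  "cw q l = (if l \<ge> 0 then concat (replicate (nat l) [(False,1),(True,q)])
             else concat (replicate (nat (-l)) [(True,-q),(False,-1)]))"

definition phi :: "int \<Rightarrow> bool \<times> int \<Rightarrow> f2word" where
  "phi q s = (if fst s then (if snd s = 0 then [] else [(True, snd s)]) else cw q (snd s))"

lemma cwp_reduced: "q \<noteq> 0 \<Longrightarrow> reduced (concat (replicate n [(False,1),(True,q)]))"
  by (induction n) (auto simp: reduced_Cons reduced_def intro: ccontr, (case_tac n; simp)+)


lemma cwn_reduced: "q \<noteq> 0 \<Longrightarrow> reduced (concat (replicate n [(True,-q),(False,-1)]))"
  by (induction n) (auto simp: reduced_Cons reduced_def intro: ccontr, (case_tac n; simp)+)

lemma cw_reduced: "q \<noteq> 0 \<Longrightarrow> reduced (cw q l)"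
  by (simp add: cw_def cwp_reduced cwn_reduced)

lemma cw_0[simp]: "cw q 0 = []" by (simp add: cw_def)

lemma cw_pos: "l > 0 \<Longrightarrow> cw q l = (False,1) # (True,q) # cw q (l - 1)"
proof -
  assume "l > 0"
  then have "nat l = Suc (nat (l - 1))" by simp
  then show ?thesis using \<open>l > 0\<close> by (simp add: cw_def)
qed

lemma cw_neg: "l < 0 \<Longrightarrow> cw q l = (True,-q) # (False,-1) # cw q (l + 1)"
proof -
  assume "l < 0"
  then have "nat (-l) = Suc (nat (-(l + 1)))" by simp
  then show ?thesis using \<open>l < 0\<close> by (simp add: cw_def)
qed

lemma cw_succ: assumes q: "q \<noteq> 0" shows "cw q (l + 1) = f2_mult [(False,1),(True,q)] (cw q l)"
proof (cases "l \<ge> 0")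
  case True
  have "cw q (l + 1) = (False,1) # (True,q) # cw q l" using cw_pos[of "l+1" q] True by simp
  moreover have "scons (True, q) (cw q l) = (True,q) # cw q l"
  proof (cases "l = 0")
    case True then show ?thesis using q by simp
  next
    case False then show ?thesis using cw_pos[of l q] True q by simp
  qed
  ultimately show ?thesis by (simp add: f2_mult_def)
next
  case False
  then show ?thesis using cw_neg[of l q] q by (simp add: f2_mult_def)
qed

lemma cw_pred: assumes q: "q \<noteq> 0" shows "cw q (l - 1) = f2_mult [(True,-q),(False,-1)] (cw q l)"
proof (cases "l \<le> 0")
  case True
  have "cw q (l - 1) = (True,-q) # (False,-1) # cw q l" using cw_neg[of "l-1" q] True by simp
  moreover have "scons (False, -1) (cw q l) = (False,-1) # cw q l"
  proof (cases "l = 0")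
    case True then show ?thesis using q by simp
  next
    case False then show ?thesis using cw_neg[of l q] True q by simp
  qed
  ultimately show ?thesis using q by (simp add: f2_mult_def)
next
  case False
  then show ?thesis using cw_pos[of l q] q by (simp add: f2_mult_def)
qed

lemma cw_add: "q \<noteq> 0 \<Longrightarrow> cw q (e + d) = f2_mult (cw q e) (cw q d)"
proof (induction e rule: int_induct[where k=0])
  case base then show ?case by simp
next
  case (step1 i)
  have r: "reduced [(False,1),(True,q)]" using step1 by (simp add: reduced_Cons)
  have "cw q (i + 1 + d) = f2_mult [(False,1),(True,q)] (cw q (i + d))"
    using cw_succ[OF step1(3), of "i + d"] by (simp add: algebra_simps)
  also have "\<dots> = f2_mult (f2_mult [(False,1),(True,q)] (cw q i)) (cw q d)"
    using step1 f2_assoc[OF r cw_reduced cw_reduced] by simp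
  finally show ?case using cw_succ[OF step1(3)] by simp
next
  case (step2 i)
  have r: "reduced [(True,-q),(False,-1)]" using step2 by (simp add: reduced_Cons)
  have "cw q (i - 1 + d) = f2_mult [(True,-q),(False,-1)] (cw q (i + d))"
    using cw_pred[OF step2(3), of "i + d"] by (simp add: algebra_simps)
  also have "\<dots> = f2_mult (f2_mult [(True,-q),(False,-1)] (cw q i)) (cw q d)"
    using step2 f2_assoc[OF r cw_reduced cw_reduced] by simp
  finally show ?case using cw_pred[OF step2(3)] by simp
qed

lemma phi_P1: "q \<noteq> 0 \<Longrightarrow> reduced (phi q s)"
  by (auto simp: phi_def cw_reduced reduced_Cons)

lemma phi_P2: "phi q (g, 0) = []"
  by (simp add: phi_def)

lemma phi_P3: "q \<noteq> 0 \<Longrightarrow> phi q (g, e + d) = f2_mult (phi q (g, e)) (phi q (g, d))"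
  by (auto simp: phi_def cw_add f2_mult_def)


lemma scons_Cons_reduced: "reduced (s # w) \<Longrightarrow> scons s w = s # w"
  by (cases s; cases w) (auto simp: reduced_Cons)

lemma extm_phi_mult: "q \<noteq> 0 \<Longrightarrow> reduced x \<Longrightarrow> reduced y \<Longrightarrow>
    extm (phi q) (f2_mult x y) = f2_mult (extm (phi q) x) (extm (phi q) y)"
  by (rule extm_mult) (auto simp: phi_P1 phi_P2 phi_P3 simp del: phi_def)

lemma extm_cw_inv: assumes q: "q \<noteq> 0"
  shows "extm (phi (-q)) (cw q l) = (if l = 0 then [] else [(False, l)])"
proof (induction l rule: int_induct[where k=0])
  case base then show ?case by simp
next
  case (step1 i)
  have r: "reduced [(False,1),(True,q)]" using q by (simp add: reduced_Cons)
  have e: "extm (phi (-q)) [(False,1),(True,q)] = [(False,1)]"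
    using q cw_pos[of 1 "-q"] by (simp add: phi_def f2_mult_def)
  have "extm (phi (-q)) (cw q (i + 1)) = f2_mult [(False,1)] (extm (phi (-q)) (cw q i))"
    using cw_succ[OF q, of i] extm_phi_mult[of "-q", OF _ r cw_reduced[OF q]] q e by simp
  then show ?case using step1 by (auto simp: f2_mult_def)
next
  case (step2 i)
  have r: "reduced [(True,-q),(False,-1)]" using q by (simp add: reduced_Cons)
  have e: "extm (phi (-q)) [(True,-q),(False,-1)] = [(False,-1)]"
    using q cw_neg[of "-1" "-q"] by (simp add: phi_def f2_mult_def)
  have "extm (phi (-q)) (cw q (i - 1)) = f2_mult [(False,-1)] (extm (phi (-q)) (cw q i))"
    using cw_pred[OF q, of i] extm_phi_mult[of "-q", OF _ r cw_reduced[OF q]] q e by simp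
  then show ?case using step2 by (auto simp: f2_mult_def)
qed

lemma extm_phi_syl: assumes q: "q \<noteq> 0"
  shows "extm (phi (-q)) (phi q s) = (if snd s = 0 then [] else [s])"
proof (cases s)
  case (Pair g e)
  show ?thesis
  proof (cases g)
    case True then show ?thesis using Pair by (simp add: phi_def f2_mult_def)
  next
    case False then show ?thesis using Pair extm_cw_inv[OF q, of e] by (simp add: phi_def)
  qed
qed

lemma extm_phi_inv: assumes q: "q \<noteq> 0" and r: "reduced x"
  shows "extm (phi (-q)) (extm (phi q) x) = x"
  using r
proof (induction x)
  case Nil then show ?case by simp
next
  case (Cons s x')
  have rx': "reduced x'" using Cons.prems reduced_tl by blast
  have ne: "snd s \<noteq> 0" using Cons.prems by (simp add: reduced_Cons)
  have "extm (phi (-q)) (extm (phi q) (s # x')) = f2_mult (extm (phi (-q)) (phi q s)) (extm (phi (-q)) (extm (phi q) x'))"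
    using extm_phi_mult[of "-q", OF _ phi_P1[OF q] extm_reduced[OF phi_P1[OF q]]] q by simp
  also have "\<dots> = scons s x'" using extm_phi_syl[OF q, of s] ne Cons.IH[OF rx'] by (simp add: f2_mult_def)
  also have "\<dots> = s # x'" using Cons.prems scons_Cons_reduced by blast
  finally show ?case .
qed

definition tau :: "int \<Rightarrow> f2word \<Rightarrow> f2word" where
  "tau q = restrict (extm (phi q)) (carrier F2)"

lemma carrier_F2: "carrier F2 = {w. reduced w}" by (simp add: F2_def)
lemma mult_F2: "x \<otimes>\<^bsub>F2\<^esub> y = f2_mult x y" by (simp add: F2_def)

lemma tau_carrier: "q \<noteq> 0 \<Longrightarrow> x \<in> carrier F2 \<Longrightarrow> tau q x \<in> carrier F2"
  by (simp add: tau_def carrier_F2 extm_reduced[OF phi_P1])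

lemma tau_inv: "q \<noteq> 0 \<Longrightarrow> x \<in> carrier F2 \<Longrightarrow> tau (-q) (tau q x) = x"
  using tau_carrier[of q x] by (simp add: tau_def carrier_F2 extm_phi_inv)

lemma tau_hom: "q \<noteq> 0 \<Longrightarrow> tau q \<in> hom F2 F2"
  by (rule homI) (auto simp: tau_carrier tau_def carrier_F2 mult_F2 extm_phi_mult f2_mult_reduced extm_reduced[OF phi_P1])

lemma tau_Aut: assumes q: "q \<noteq> 0" shows "tau q \<in> Aut"
proof -
  have q': "-q \<noteq> 0" using q by simp
  have "bij_betw (tau q) (carrier F2) (carrier F2)"
    by (rule bij_betwI[where g="tau (-q)"])
       (auto simp: tau_carrier q q' tau_inv tau_inv[OF q', simplified])
  then show ?thesis using tau_hom[OF q] by (simp add: Aut_def iso_def tau_def)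
qed

lemma tau_inv_into: assumes q: "q \<noteq> 0" and x: "x \<in> carrier F2"
  shows "inv_into (carrier F2) (tau q) x = tau (-q) x"
proof -
  have q': "-q \<noteq> 0" using q by simp
  have "inj_on (tau q) (carrier F2)" by (metis inj_onI q tau_inv)
  moreover have "tau q (tau (-q) x) = x" using tau_inv[OF q' x] by simp
  ultimately show ?thesis using tau_carrier[OF q' x] by (simp add: inv_into_f_eq)
qed


section \<open>Invariance of f\<close>

definition hA :: "f2word \<Rightarrow> int" where
  "hA w = (case w of [] \<Rightarrow> 0 | s # _ \<Rightarrow> (if fst s then snd s else 0))"

definition bsg :: "f2word \<Rightarrow> int" where
  "bsg w = (case dropWhile fst w of [] \<Rightarrow> 0 | s # _ \<Rightarrow> sgn (snd s))"

lemma fpz_Nil[simp]: "free_prod_zero fA [] = 0" by (simp add: free_prod_zero_def)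
lemma fpz_Cons[simp]: "free_prod_zero fA (s # w) = (if fst s then fA (snd s) else 0) + free_prod_zero fA w"
  by (simp add: free_prod_zero_def)

lemma hA_simps[simp]: "hA [] = 0" "hA ((True,k) # w) = k" "hA ((False,k) # w) = 0"
  by (simp_all add: hA_def)
lemma bsg_simps[simp]: "bsg [] = 0" "bsg ((True,k) # w) = bsg w" "bsg ((False,k) # w) = sgn k"
  by (simp_all add: bsg_def)

lemma fpz_scons_b: "free_prod_zero fA (scons (False, l) y) = free_prod_zero fA y"
  by (cases y) auto

lemma fpz_scons_a: "fA 0 = 0 \<Longrightarrow>
   free_prod_zero fA (scons (True, k) y) = free_prod_zero fA y - fA (hA y) + fA (k + hA y)"
  by (cases y) (auto simp: hA_def)

lemma bsg_scons_a: "bsg (scons (True, k) y) = bsg y"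
  by (cases y) (auto simp: bsg_def)

lemma hA_scons_a: "reduced y \<Longrightarrow> hA (scons (True, k) y) = k + hA y"
proof (cases y)
  case Nil then show ?thesis by simp
next
  case (Cons s y')
  assume r: "reduced y"
  show ?thesis
  proof (cases y')
    case Nil then show ?thesis using Cons by (cases s) (auto simp: hA_def)
  next
    case (Cons t y'')
    then show ?thesis using \<open>y = s # y'\<close> r by (cases s; cases t) (auto simp: hA_def reduced_Cons)
  qed
qed

context
  fixes fA :: "int \<Rightarrow> real" and q :: int
  assumes f0: "fA 0 = 0" and per: "\<And>k. fA (k + q) = fA k" and q: "q \<noteq> 0"
begin

lemma per'[simp]: "fA (k + q) = fA k" "fA (q + k) = fA k" "fA (k - q) = fA k" "fA (- q + k) = fA k"
    "fA q = 0" "fA (-q) = 0"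
  using per[of k] per[of "k - q"] per[of 0] per[of "-q"] f0 by (simp_all add: add.commute)

lemma LBp: assumes "n \<ge> 1" "reduced y" "hA y = -q \<Longrightarrow> bsg y \<ge> 0"
  shows "free_prod_zero fA (foldr scons (concat (replicate n [(False,1),(True,q)])) y) = free_prod_zero fA y
     \<and> (\<exists>m Z. foldr scons (concat (replicate n [(False,1),(True,q)])) y = (False, m) # Z \<and> m > 0)"
  using assms(1)
proof (induction n rule: dec_induct)
  case base
  show ?case
  proof (cases y)
    case Nil then show ?thesis using q by auto
  next
    case (Cons s y')
    obtain g d where s: "s = (g, d)" by fastforce
    show ?thesis
    proof (cases g)
      case False then show ?thesis using Cons s q by auto
    next
      case True
      show ?thesis
      proof (cases "q + d = 0")
        case False then show ?thesis using Cons s True by auto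
      next
        case qd: True
        have d: "d = -q" using qd by simp
        have rc: "reduced ((True, d) # y')" using assms(2) Cons s True by simp
        show ?thesis
        proof (cases y')
          case Nil then show ?thesis using Cons s True qd d q f0 by simp
        next
          case (Cons t y'')
          obtain h c where t: "t = (h, c)" by fastforce
          have h: "\<not> h" "c \<noteq> 0" using rc Cons t by (auto simp: reduced_Cons)
          have "c > 0" using assms(3) \<open>y = s # y'\<close> s True d Cons t h by (auto simp: sgn_if split: if_splits)
          then show ?thesis using \<open>y = s # y'\<close> s True qd Cons t h d f0 by simp
        qed
      qed
    qed
  qed
next
  case (step n)
  then obtain m Z where Z: "foldr scons (concat (replicate n [(False,1),(True,q)])) y = (False, m) # Z" "m > 0"
    by blast
  then show ?case using step q by auto
qed

lemma LBn: assumes "n \<ge> 1" "reduced y" "hA y = 0 \<Longrightarrow> bsg y \<le> 0"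
  shows "free_prod_zero fA (foldr scons (concat (replicate n [(True,-q),(False,-1)])) y) = free_prod_zero fA y
     \<and> (\<exists>m Z. foldr scons (concat (replicate n [(True,-q),(False,-1)])) y = (True, -q) # (False, m) # Z \<and> m < 0)"
  using assms(1)
proof (induction n rule: dec_induct)
  case base
  show ?case
  proof (cases y)
    case Nil then show ?thesis using q by auto
  next
    case (Cons s y')
    obtain g d where s: "s = (g, d)" by fastforce
    show ?thesis
    proof (cases g)
      case True then show ?thesis using Cons s q by auto
    next
      case False
      have "d \<noteq> 0" using assms(2) Cons s by (simp add: reduced_Cons)
      moreover have "d \<le> 0" using assms(3) Cons s False by (auto simp: sgn_if split: if_splits)
      ultimately show ?thesis using Cons s False q by auto
    qed
  qed
next
  case (step n)
  then obtain m Z where Z: "foldr scons (concat (replicate n [(True,-q),(False,-1)])) y = (True, -q) # (False, m) # Z" "m < 0"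
    by blast
  then show ?case using step q by auto
qed

lemma hA_zero_iff: "reduced x \<Longrightarrow> (x = [] \<or> fst (hd x)) \<Longrightarrow> hA x = 0 \<longleftrightarrow> x = []"
  by (cases x) (auto simp: reduced_Cons hA_def)

lemma hA_zero_b: "(x = [] \<or> \<not> fst (hd x)) \<Longrightarrow> hA x = 0"
  by (cases x) (auto simp: hA_def)

lemma bsg_a: "(x = [] \<or> fst (hd x)) \<Longrightarrow> bsg ((False, e) # x) = sgn e"
  by simp

lemma inv_main: "reduced x \<Longrightarrow>
   free_prod_zero fA (extm (phi q) x) = free_prod_zero fA x \<and>
   bsg (extm (phi q) x) = bsg x \<and>
   hA (extm (phi q) x) = hA x - (if bsg x < 0 then q else 0)"
proof (induction x)
  case Nil then show ?case by simp
next
  case (Cons s x')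
  obtain g e where s: "s = (g, e)" by fastforce
  have rx': "reduced x'" using Cons.prems reduced_tl by blast
  have e: "e \<noteq> 0" and hd: "x' = [] \<or> fst (hd x') \<noteq> g" using Cons.prems s by (auto simp: reduced_Cons)
  define y where "y = extm (phi q) x'"
  have ry: "reduced y" unfolding y_def using extm_reduced[OF phi_P1[OF q]] .
  have IH: "free_prod_zero fA y = free_prod_zero fA x'" "bsg y = bsg x'"
       "hA y = hA x' - (if bsg x' < 0 then q else 0)" using Cons.IH[OF rx'] y_def by auto
  show ?case
  proof (cases g)
    case True
    have h0: "hA x' = 0" using hd True hA_zero_b by auto
    have ex: "extm (phi q) (s # x') = scons (True, e) y"
      using s True e by (simp add: y_def phi_def f2_mult_def)
    show ?thesis using ex IH h0 s True fpz_scons_a[of fA e y, OF f0] bsg_scons_a[of e y] hA_scons_a[OF ry, of e]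
      by (cases "bsg x' < 0") (simp_all add: f0)
  next
    case False
    have ex: "extm (phi q) (s # x') = foldr scons (cw q e) y"
      using s False by (simp add: y_def phi_def f2_mult_def)
    have hd': "x' = [] \<or> fst (hd x')" using hd False by auto
    have z: "hA x' = 0 \<longleftrightarrow> x' = []" using hA_zero_iff[OF rx' hd'] .
    show ?thesis
    proof (cases "e > 0")
      case True
      have n: "nat e \<ge> 1" using True by simp
      have c: "hA y = -q \<Longrightarrow> bsg y \<ge> 0"
        using IH z q by (cases "bsg x' < 0") auto
      obtain m Z where mZ: "foldr scons (cw q e) y = (False, m) # Z" "m > 0"
        and F: "free_prod_zero fA (foldr scons (cw q e) y) = free_prod_zero fA y"
        using LBp[OF n ry c] True by (auto simp: cw_def)
      show ?thesis using ex mZ F IH s False True by simp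
    next
      case False2: False
      then have neg: "e < 0" using e by simp
      have n: "nat (-e) \<ge> 1" using neg by simp
      have c: "hA y = 0 \<Longrightarrow> bsg y \<le> 0"
        using IH z q by (cases "bsg x' < 0") auto
      obtain m Z where mZ: "foldr scons (cw q e) y = (True, -q) # (False, m) # Z" "m < 0"
        and F: "free_prod_zero fA (foldr scons (cw q e) y) = free_prod_zero fA y"
        using LBn[OF n ry c] neg by (auto simp: cw_def)
      show ?thesis using ex mZ F IH s False neg by simp
    qed
  qed
qed

end


section \<open>Stabilizers\<close>

lemma tau_fix: assumes f0: "fA 0 = 0" and per: "\<And>k. fA (k + q) = fA k" and q: "q \<noteq> 0"
  and x: "x \<in> carrier F2"
  shows "free_prod_zero fA (tau (-q) x) = free_prod_zero fA x"
proof -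
  have per2: "\<And>k. fA (k + -q) = fA k" using per by (metis diff_add_cancel diff_minus_eq_add minus_minus)
  have q2: "-q \<noteq> 0" using q by simp
  show ?thesis using inv_main[OF f0 per2 q2, of x] x by (simp add: tau_def carrier_F2)
qed

lemma act_tau: assumes "q \<noteq> 0" "x \<in> carrier F2"
  shows "act (tau q) f x = f (tau (-q) x)"
  using tau_inv_into[OF assms] by (simp add: act_def)

lemma tau_stabs: assumes f0: "fA 0 = 0" and per: "\<And>k. fA (k + q) = fA k" and q: "q \<noteq> 0"
  shows "tau q \<in> Stab_Aut (free_prod_zero fA)"
    "tau q \<in> Stab_Aut (homog (free_prod_zero fA))"
    "tau q \<in> {\<tau> \<in> Aut. same_bclass (act \<tau> (free_prod_zero fA)) (free_prod_zero fA)}"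
proof -
  let ?f = "free_prod_zero fA"
  have fixf: "\<And>x. x \<in> carrier F2 \<Longrightarrow> act (tau q) ?f x = ?f x"
    using act_tau[OF q] tau_fix[OF f0 per q] by simp
  show "tau q \<in> Stab_Aut ?f" using fixf tau_Aut[OF q] by (simp add: Stab_Aut_def)
  have q2: "-q \<noteq> 0" using q by simp
  have G: "group F2" by (rule group_F2)
  have "\<And>x. x \<in> carrier F2 \<Longrightarrow> act (tau q) (homog ?f) x = homog ?f x"
  proof -
    fix x assume x: "x \<in> carrier F2"
    have "\<And>k::nat. ?f (tau (-q) x [^]\<^bsub>F2\<^esub> k) = ?f (x [^]\<^bsub>F2\<^esub> k)"
    proof -
      fix k :: nat
      have "tau (-q) x [^]\<^bsub>F2\<^esub> k = tau (-q) (x [^]\<^bsub>F2\<^esub> k)"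
        using hom_nat_pow[OF tau_hom[OF q2] x G G] by simp
      moreover have "x [^]\<^bsub>F2\<^esub> k \<in> carrier F2" using x G by (simp add: group.is_monoid monoid.nat_pow_closed)
      ultimately show "?f (tau (-q) x [^]\<^bsub>F2\<^esub> k) = ?f (x [^]\<^bsub>F2\<^esub> k)"
        using tau_fix[OF f0 per q] by simp
    qed
    then show "act (tau q) (homog ?f) x = homog ?f x"
      using act_tau[OF q x] by (simp add: homog_def)
  qed
  then show "tau q \<in> Stab_Aut (homog ?f)" using tau_Aut[OF q] by (simp add: Stab_Aut_def)
  have "same_bclass (act (tau q) ?f) ?f"
    unfolding same_bclass_def
  proof (intro exI[of _ "\<lambda>_. 0"] conjI ballI)
    show "\<exists>C. \<forall>x\<in>carrier F2. \<bar>(0::real)\<bar> \<le> C" by auto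
  next
    fix x y assume "x \<in> carrier F2" "y \<in> carrier F2"
    moreover then have "x \<otimes>\<^bsub>F2\<^esub> y \<in> carrier F2" using G by (simp add: group.is_monoid monoid.m_closed)
    ultimately show "cobdry (act (tau q) ?f) x y - cobdry ?f x y = cobdry (\<lambda>_. 0) x y"
      using fixf by (simp add: cobdry_def)
  qed
  then show "tau q \<in> {\<tau> \<in> Aut. same_bclass (act \<tau> ?f) ?f}" using tau_Aut[OF q] by simp
qed

definition esA :: "f2word \<Rightarrow> int" where
  "esA w = sum_list (map (\<lambda>s. if fst s then snd s else 0) w)"

lemma esA_scons: "esA (scons s w) = (if fst s then snd s else 0) + esA w"
  by (cases s; cases w) (auto simp: esA_def)

lemma esA_Cons[simp]: "esA (s # w) = (if fst s then snd s else 0) + esA w"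
  by (simp add: esA_def)

lemma esA_mult: "esA (f2_mult x y) = esA x + esA y"
  by (induction x) (simp_all add: f2_mult_def esA_scons, simp add: esA_def)

lemma out_class_self: "\<sigma> \<in> Aut \<Longrightarrow> \<sigma> \<in> out_class \<sigma>"
proof -
  assume a: "\<sigma> \<in> Aut"
  have G: "group F2" by (rule group_F2)
  have one: "\<one>\<^bsub>F2\<^esub> = []" by (simp add: F2_def)
  have "\<And>x. x \<in> carrier F2 \<Longrightarrow> \<sigma> x \<in> carrier F2"
    using a by (auto simp: Aut_def iso_def hom_def)
  then have "\<forall>x\<in>carrier F2. \<sigma> x = [] \<otimes>\<^bsub>F2\<^esub> \<sigma> x \<otimes>\<^bsub>F2\<^esub> inv\<^bsub>F2\<^esub> []"
    using G one by (metis monoid.inv_one group.is_monoid monoid.l_one monoid.r_one)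
  moreover have "[] \<in> carrier F2" by (simp add: carrier_F2)
  ultimately show ?thesis using a by (auto simp: out_class_def)
qed

lemma out_class_inj: assumes q: "q \<noteq> 0" and q': "q' \<noteq> 0"
  and eq: "out_class (tau q) = out_class (tau q')"
  shows "q = q'"
proof -
  have G: "group F2" by (rule group_F2)
  have "tau q' \<in> out_class (tau q)" using out_class_self[OF tau_Aut[OF q']] eq by simp
  then obtain g where g: "g \<in> carrier F2"
    and h: "\<forall>x\<in>carrier F2. tau q' x = g \<otimes>\<^bsub>F2\<^esub> tau q x \<otimes>\<^bsub>F2\<^esub> inv\<^bsub>F2\<^esub> g"
    by (auto simp: out_class_def)
  have b: "[(False, 1)] \<in> carrier F2" by (simp add: carrier_F2 reduced_Cons)
  have t: "\<And>r. r \<noteq> 0 \<Longrightarrow> tau r [(False, 1)] = [(False,1),(True,r)]"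
    using b by (simp add: tau_def phi_def cw_pos f2_mult_def)
  have ig: "esA (inv\<^bsub>F2\<^esub> g) + esA g = 0"
  proof -
    have "inv\<^bsub>F2\<^esub> g \<otimes>\<^bsub>F2\<^esub> g = \<one>\<^bsub>F2\<^esub>" using G g by (simp add: group.l_inv)
    then have "esA (f2_mult (inv\<^bsub>F2\<^esub> g) g) = esA []" by (simp add: F2_def)
    then show ?thesis by (simp only: esA_mult) (simp add: esA_def)
  qed
  have "esA (tau q' [(False, 1)]) = esA g + esA (tau q [(False, 1)]) + esA (inv\<^bsub>F2\<^esub> g)"
    using h b by (simp add: mult_F2 esA_mult)
  then show ?thesis using t[OF q] t[OF q'] ig by (simp add: esA_def[of "[]"])
qed

theorem corollary3p21:
  fixes fA :: "int \<Rightarrow> real"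
  assumes "bounded_fun fA" and "alternating fA" and "periodic fA"
  shows "infinite (Stab_Aut (free_prod_zero fA))
    \<and> infinite (Stab_Out_fun (homog (free_prod_zero fA)))
    \<and> infinite (Stab_Out_bclass (free_prod_zero fA))"
proof -
  have "fA (- 0) = - fA 0" using assms(2) unfolding alternating_def by blast
  then have f0: "fA 0 = 0" by simp
  obtain n where n: "n \<noteq> 0" "\<And>k. fA (k + n) = fA k" using assms(3) unfolding periodic_def by blast
  define Q where "Q = (\<lambda>m::nat. int (Suc m) * n)"
  have Qnz: "\<And>m. Q m \<noteq> 0" using n by (simp add: Q_def)
  have perm: "\<And>m k. fA (k + int m * n) = fA k"
  proof -
    fix m k show "fA (k + int m * n) = fA k"
    proof (induction m arbitrary: k)
      case 0 then show ?case by simp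
    next
      case (Suc m)
      have "fA (k + int (Suc m) * n) = fA ((k + int m * n) + n)" by (simp add: algebra_simps)
      then show ?case using n(2) Suc by simp
    qed
  qed
  have perQ: "\<And>m k. fA (k + Q m) = fA k" using perm by (simp add: Q_def del: of_nat_Suc)
  have injQ: "inj Q" using n by (auto simp: Q_def inj_on_def)
  have injO: "inj (\<lambda>m. out_class (tau (Q m)))"
  proof (rule inj_onI)
    fix a b assume "out_class (tau (Q a)) = out_class (tau (Q b))"
    then have "Q a = Q b" using out_class_inj[OF Qnz Qnz] by blast
    then show "a = b" using injQ by (simp add: inj_eq)
  qed
  have injT: "inj (\<lambda>m. tau (Q m))"
  proof (rule inj_onI)
    fix a b assume "tau (Q a) = tau (Q b)"
    then have "out_class (tau (Q a)) = out_class (tau (Q b))" by simp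
    then show "a = b" using injD[OF injO, of a b] by simp
  qed
  note st = tau_stabs[OF f0 perQ Qnz]
  have s1: "range (\<lambda>m. tau (Q m)) \<subseteq> Stab_Aut (free_prod_zero fA)" using st(1) by auto
  have s2: "range (\<lambda>m. out_class (tau (Q m))) \<subseteq> Stab_Out_fun (homog (free_prod_zero fA))"
    using st(2) by (auto simp: Stab_Out_fun_def)
  have s3: "range (\<lambda>m. out_class (tau (Q m))) \<subseteq> Stab_Out_bclass (free_prod_zero fA)"
    using st(3) unfolding Stab_Out_bclass_def by (auto intro: imageI)
  have i1: "infinite (range (\<lambda>m. tau (Q m)))" using injT by (simp add: range_inj_infinite)
  have i2: "infinite (range (\<lambda>m. out_class (tau (Q m))))" using injO by (simp add: range_inj_infinite)
  have "infinite (Stab_Aut (free_prod_zero fA))" using i1 s1 infinite_super by blast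
  moreover have "infinite (Stab_Out_fun (homog (free_prod_zero fA)))" using i2 s2 infinite_super by blast
  moreover have "infinite (Stab_Out_bclass (free_prod_zero fA))" using i2 s3 infinite_super by blast
  ultimately show ?thesis by blast
qed

end
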